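(* Let $G_{\max}=(V,E_{\max})$ be a finite, simple, connected, undirected graph, and let $\lambda',\mu',\gamma'>0$ with $\frac{\lambda'}{\mu'}>1$ and $0<\gamma'\le 1$ (Regime III). For a network state $\mathbf{A}$ (a subset $E(\mathbf{A})\subseteq E_{\max}$ of closed edges) let $g(E(\mathbf{A}))$ be the number of $P_3$ subgraphs (paths with 3 vertices) formed by $E(\mathbf{A})$, and call a maximizer of $\pi(\mathbf{A})\propto(\lambda'/\mu')^{|E(\mathbf{A})|}\gamma'^{\,g(E(\mathbf{A}))}$ over all network states a most-probable network (for SUD-DBP). If $\lambda'\gamma'<\mu'$, then the most-probable networks are exactly the network states $\mathbf{A}^*$ with $g(E(\mathbf{A}^* ))=0$ and $|E(\mathbf{A}^* )|$ maximum among such states; equivalently, $E(\mathbf{A}^* )$ is a maximum matching of $G_{\max}$.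
   Context: A matching of a graph is a set of edges no two of which share a vertex; a maximum matching is a matching with the largest possible number of edges. *)

theory Defs
  imports Complex_Main
begin

definition simple_graph :: "'a set \<Rightarrow> 'a set set \<Rightarrow> bool" where
  "simple_graph V E \<longleftrightarrow> finite V \<and>
     (\<forall>e\<in>E. \<exists>u v. u \<noteq> v \<and> u \<in> V \<and> v \<in> V \<and> e = {u, v})"

definition adj :: "'a set set \<Rightarrow> 'a \<Rightarrow> 'a \<Rightarrow> bool" where
  "adj E u v \<longleftrightarrow> {u, v} \<in> E"

definition connected_graph :: "'a set \<Rightarrow> 'a set set \<Rightarrow> bool" where
  "connected_graph V E \<longleftrightarrow> V \<noteq> {} \<and>
     (\<forall>u\<in>V. \<forall>v\<in>V. (adj E)\<^sup>*\<^sup>* u v)"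

text \<open>Number of P3 subgraphs formed by an edge set: unordered pairs of distinct
  edges sharing a vertex (each such pair spans exactly one path on 3 vertices).\<close>
definition num_P3 :: "'a set set \<Rightarrow> nat" where
  "num_P3 E = card {p. \<exists>e1 e2. p = {e1, e2} \<and> e1 \<in> E \<and> e2 \<in> E \<and> e1 \<noteq> e2 \<and> e1 \<inter> e2 \<noteq> {}}"

text \<open>Unnormalised stationary weight; pi(A) is proportional to this.\<close>
definition weight :: "real \<Rightarrow> real \<Rightarrow> real \<Rightarrow> 'a set set \<Rightarrow> real" where
  "weight lam mu gam A = (lam / mu) ^ card A * gam ^ num_P3 A"

definition most_probable :: "'a set set \<Rightarrow> real \<Rightarrow> real \<Rightarrow> real \<Rightarrow> 'a set set \<Rightarrow> bool" where
  "most_probable Emax lam mu gam A \<longleftrightarrow> A \<subseteq> Emax \<and>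
     (\<forall>B. B \<subseteq> Emax \<longrightarrow> weight lam mu gam B \<le> weight lam mu gam A)"

definition matching :: "'a set set \<Rightarrow> 'a set set \<Rightarrow> bool" where
  "matching E M \<longleftrightarrow> M \<subseteq> E \<and> (\<forall>e1\<in>M. \<forall>e2\<in>M. e1 \<noteq> e2 \<longrightarrow> e1 \<inter> e2 = {})"

definition maximum_matching :: "'a set set \<Rightarrow> 'a set set \<Rightarrow> bool" where
  "maximum_matching E M \<longleftrightarrow> matching E M \<and> (\<forall>M'. matching E M' \<longrightarrow> card M' \<le> card M)"

end

theory Submission
  imports Defs
begin

definition P3set :: "'a set set \<Rightarrow> 'a set set set" where
  "P3set E = {p. \<exists>e1 e2. p = {e1, e2} \<and> e1 \<in> E \<and> e2 \<in> E \<and> e1 \<noteq> e2 \<and> e1 \<inter> e2 \<noteq> {}}"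

lemma num_P3_alt: "num_P3 E = card (P3set E)"
  unfolding num_P3_def P3set_def by simp

lemma P3_finite: "finite A \<Longrightarrow> finite (P3set A)"
  by (rule finite_subset[of _ "Pow A"]) (auto simp: P3set_def)

lemma num0_iff: "finite A \<Longrightarrow> num_P3 A = 0 \<longleftrightarrow> (\<forall>e1\<in>A. \<forall>e2\<in>A. e1 \<noteq> e2 \<longrightarrow> e1 \<inter> e2 = {})"
  unfolding num_P3_alt using P3_finite[of A] by (auto simp: P3set_def)

lemma decrease:
  fixes r gam :: real
  assumes fin: "finite A" and pos: "num_P3 A > 0" and r: "r > 1" and g0: "gam > 0" and g1: "gam \<le> 1"
    and rg: "r * gam < 1"
  shows "\<exists>e\<in>A. r ^ card A * gam ^ num_P3 A < r ^ card (A - {e}) * gam ^ num_P3 (A - {e})"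
proof -
  have "P3set A \<noteq> {}" using pos P3_finite[OF fin] by (auto simp: num_P3_alt)
  then obtain e1 e2 where e: "e1 \<in> A" "e2 \<in> A" "e1 \<noteq> e2" "e1 \<inter> e2 \<noteq> {}"
    by (auto simp: P3set_def)
  have sub: "P3set (A - {e1}) \<subset> P3set A"
  proof
    show "P3set (A - {e1}) \<subseteq> P3set A" by (auto simp: P3set_def)
    have "{e1, e2} \<in> P3set A" using e by (auto simp: P3set_def)
    moreover have "{e1, e2} \<notin> P3set (A - {e1})"
      unfolding P3set_def by (auto simp: doubleton_eq_iff)
    ultimately show "P3set (A - {e1}) \<noteq> P3set A" by blast
  qed
  have lt: "num_P3 (A - {e1}) < num_P3 A"
    unfolding num_P3_alt by (rule psubset_card_mono[OF P3_finite[OF fin] sub])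
  define n where "n = card A - 1"
  have "card A > 0" using e fin by (auto simp: card_gt_0_iff)
  hence cA: "card A = Suc n" using n_def by simp
  have cB: "card (A - {e1}) = n" using e fin cA by simp
  define g where "g = num_P3 A - 1"
  have gA: "num_P3 A = Suc g" using pos g_def by simp
  have "gam ^ g \<le> gam ^ num_P3 (A - {e1})"
    using lt gA g0 g1 by (intro power_decreasing) auto
  have "r ^ card A * gam ^ num_P3 A = r ^ n * (r * gam) * gam ^ g"
    using cA gA by (simp add: algebra_simps)
  also have "\<dots> < r ^ n * gam ^ g"
    using rg r g0 by (simp add: mult_less_cancel_left_pos)
  also have "\<dots> \<le> r ^ n * gam ^ num_P3 (A - {e1})"
    using \<open>gam ^ g \<le> _\<close> r by simp
  finally show ?thesis using cB e(1) by auto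
qed

lemma reach:
  fixes r gam :: real
  assumes fin: "finite B" and r: "r > 1" and g0: "gam > 0" and g1: "gam \<le> 1"
    and rg: "r * gam < 1"
  shows "\<exists>C. C \<subseteq> B \<and> num_P3 C = 0 \<and> r ^ card B * gam ^ num_P3 B \<le> r ^ card C"
  using fin
proof (induction "card B" arbitrary: B rule: less_induct)
  case less
  show ?case
  proof (cases "num_P3 B = 0")
    case True then show ?thesis by (intro exI[of _ B]) simp
  next
    case False
    then obtain e where e: "e \<in> B"
      and w: "r ^ card B * gam ^ num_P3 B < r ^ card (B - {e}) * gam ^ num_P3 (B - {e})"
      using decrease[OF less.prems _ r g0 g1 rg] by auto
    have "card (B - {e}) < card B" using e less.prems by (meson card_Diff1_less)
    moreover have "finite (B - {e})" using less.prems by simp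
    ultimately obtain C where C: "C \<subseteq> B - {e}" "num_P3 C = 0"
      "r ^ card (B - {e}) * gam ^ num_P3 (B - {e}) \<le> r ^ card C"
      using less.hyps[of "B - {e}"] by blast
    have "r ^ card B * gam ^ num_P3 B \<le> r ^ card C" using w C(3) by linarith
    moreover have "C \<subseteq> B" using C(1) by blast
    ultimately show ?thesis using C(2) by blast
  qed
qed

theorem theorem6:
  fixes V :: "'a set" and Emax :: "'a set set" and lam mu gam :: real
  assumes "simple_graph V Emax" and "connected_graph V Emax"
    and "lam > 0" and "mu > 0" and "gam > 0"
    and "lam / mu > 1" and "gam \<le> 1"
    and "lam * gam < mu"
  shows "(\<forall>A. most_probable Emax lam mu gam A \<longleftrightarrow>
            (A \<subseteq> Emax \<and> num_P3 A = 0 \<and>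
             (\<forall>B. B \<subseteq> Emax \<and> num_P3 B = 0 \<longrightarrow> card B \<le> card A)))
       \<and> (\<forall>A. most_probable Emax lam mu gam A \<longleftrightarrow> maximum_matching Emax A)"
proof -
  define r where "r = lam / mu"
  have r: "r > 1" using assms r_def by simp
  have rg: "r * gam < 1" using assms unfolding r_def
    by (simp add: field_simps)
  have g0: "gam > 0" and g1: "gam \<le> 1" using assms by auto
  have finE: "finite Emax"
  proof -
    have "Emax \<subseteq> Pow V"
    proof
      fix e assume "e \<in> Emax"
      then obtain u v where "u \<in> V" "v \<in> V" "e = {u, v}"
        using assms(1) unfolding simple_graph_def by meson
      then show "e \<in> Pow V" by auto
    qed
    moreover have "finite V" using assms(1) unfolding simple_graph_def by simp
    ultimately show ?thesis using finite_subset by blast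
  qed
  have w: "weight lam mu gam B = r ^ card B * gam ^ num_P3 B" for B :: "'a set set"
    unfolding weight_def r_def by simp
  have mono: "r ^ a \<le> r ^ b \<longleftrightarrow> a \<le> b" for a b :: nat using r by simp
  have main: "most_probable Emax lam mu gam A \<longleftrightarrow>
            (A \<subseteq> Emax \<and> num_P3 A = 0 \<and>
             (\<forall>B. B \<subseteq> Emax \<and> num_P3 B = 0 \<longrightarrow> card B \<le> card A))" for A
  proof
    assume mp: "most_probable Emax lam mu gam A"
    hence AE: "A \<subseteq> Emax" and le: "\<And>B. B \<subseteq> Emax \<Longrightarrow> weight lam mu gam B \<le> weight lam mu gam A"
      unfolding most_probable_def by auto
    have finA: "finite A" using AE finE finite_subset by blast
    have z: "num_P3 A = 0"
    proof (rule ccontr)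
      assume "num_P3 A \<noteq> 0"
      then obtain e where "e \<in> A"
        "r ^ card A * gam ^ num_P3 A < r ^ card (A - {e}) * gam ^ num_P3 (A - {e})"
        using decrease[OF finA _ r g0 g1 rg] by auto
      moreover have "A - {e} \<subseteq> Emax" using AE by auto
      ultimately show False using le[of "A - {e}"] by (simp add: w)
    qed
    show "A \<subseteq> Emax \<and> num_P3 A = 0 \<and> (\<forall>B. B \<subseteq> Emax \<and> num_P3 B = 0 \<longrightarrow> card B \<le> card A)"
    proof (intro conjI AE z allI impI)
      fix B assume "B \<subseteq> Emax \<and> num_P3 B = 0"
      then have "r ^ card B \<le> r ^ card A" using le[of B] z by (simp add: w)
      then show "card B \<le> card A" using mono by simp
    qed
  next
    assume h: "A \<subseteq> Emax \<and> num_P3 A = 0 \<and> (\<forall>B. B \<subseteq> Emax \<and> num_P3 B = 0 \<longrightarrow> card B \<le> card A)"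
    show "most_probable Emax lam mu gam A"
      unfolding most_probable_def
    proof (intro conjI allI impI)
      show "A \<subseteq> Emax" using h by simp
      fix B assume BE: "B \<subseteq> Emax"
      have "finite B" using BE finE finite_subset by blast
      then obtain C where C: "C \<subseteq> B" "num_P3 C = 0" "r ^ card B * gam ^ num_P3 B \<le> r ^ card C"
        using reach[OF _ r g0 g1 rg] by blast
      have "card C \<le> card A" using h C BE by auto
      hence "r ^ card C \<le> r ^ card A" using mono by simp
      then show "weight lam mu gam B \<le> weight lam mu gam A" using C h by (simp add: w)
    qed
  qed
  have mm: "maximum_matching Emax A \<longleftrightarrow>
            (A \<subseteq> Emax \<and> num_P3 A = 0 \<and>
             (\<forall>B. B \<subseteq> Emax \<and> num_P3 B = 0 \<longrightarrow> card B \<le> card A))" for A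
  proof -
    have m: "matching Emax B \<longleftrightarrow> B \<subseteq> Emax \<and> num_P3 B = 0" for B
    proof (cases "B \<subseteq> Emax")
      case True
      then have "finite B" using finE finite_subset by blast
      then show ?thesis using True num0_iff[of B] unfolding matching_def by auto
    next
      case False then show ?thesis unfolding matching_def by auto
    qed
    show ?thesis unfolding maximum_matching_def m by auto
  qed
  show ?thesis using main mm by simp
qed

end
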